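(* Let $E\in(-2,2)$, $k=\arccos(-E/2)\in(0,\pi)$, let $w_\sigma$ be a compactly supported real random variable on a probability space $(\Sigma,\mathbb P)$, let $\delta\in\mathbb R$, and let $$T^{\epsilon,\delta}_\sigma=\begin{pmatrix}e^{-\imath k}&0\\0&e^{\imath k}\end{pmatrix}\exp\Big[\frac{\imath\delta+\epsilon w_\sigma}{2\sin(k)}(B_2+B_3)\Big].$$ If $\epsilon\ne0$ and the support of $w_\sigma$ contains more than one point, then the support of $T^{\epsilon,\delta}_\sigma$ is strongly irreducible, i.e. every finite set $F\subset\overline{\mathbb C}$ satisfies $\mathrm{supp}(T^{\epsilon,\delta}_\sigma)\cdot F\not\subset F$.
   Context: $B_2=\begin{pmatrix}0&\imath\\-\imath&0\end{pmatrix}$, $B_3=\begin{pmatrix}\imath&0\\0&-\imath\end{pmatrix}$. For $T=\begin{pmatrix}a&b\\c&d\end{pmatrix}$ with $\det T=1$, the Möbius action on $\overline{\mathbb C}=\mathbb C\cup\{\infty\}$ is $T\cdot z=\frac{az+b}{cz+d}$; $\mathrm{supp}(T^{\epsilon,\delta}_\sigma)$ is the support of the distribution of the random matrix, and $\mathrm{supp}(T^{\epsilon,\delta}_\sigma)\cdot F=\{T\cdot z:T\in\mathrm{supp}(T^{\epsilon,\delta}_\sigma),z\in F\}$. (These matrices are the single-site Anderson transfer matrices at energy $E+\epsilon(\cdot)-\imath\delta$ after the basis change to $\mathrm{SU}(1,1)$ form.) *)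

theory Defs
  imports "HOL-Probability.Probability"
begin

definition msupport :: "'a::topological_space measure \<Rightarrow> 'a set" where
  "msupport N = {x. \<forall>U. open U \<longrightarrow> x \<in> U \<longrightarrow> emeasure N U > 0}"

type_synonym cmat2 = "complex^2^2"

definition cmscale :: "complex \<Rightarrow> cmat2 \<Rightarrow> cmat2" where
  "cmscale c A = (\<chi> i j. c * A $ i $ j)"

fun mpow :: "cmat2 \<Rightarrow> nat \<Rightarrow> cmat2" where
  "mpow A 0 = mat 1"
| "mpow A (Suc n) = A ** mpow A n"

definition mexp :: "cmat2 \<Rightarrow> cmat2" where
  "mexp A = (\<Sum>n. (1 / fact n) *\<^sub>R mpow A n)"

definition mk2 :: "complex \<Rightarrow> complex \<Rightarrow> complex \<Rightarrow> complex \<Rightarrow> cmat2" where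
  "mk2 a b c d = vector [vector [a, b], vector [c, d]]"

definition B2 :: cmat2 where "B2 = mk2 0 \<i> (-\<i>) 0"
definition B3 :: cmat2 where "B3 = mk2 \<i> 0 0 (-\<i>)"

text \<open>Extended complex plane: None = \<infinity>. Moebius action.\<close>
fun mob_act :: "cmat2 \<Rightarrow> complex option \<Rightarrow> complex option" where
  "mob_act T (Some z) =
     (if T$2$1 * z + T$2$2 = 0 then None
      else Some ((T$1$1 * z + T$1$2) / (T$2$1 * z + T$2$2)))"
| "mob_act T None = (if T$2$1 = 0 then None else Some (T$1$1 / T$2$1))"

definition transfer :: "real \<Rightarrow> real \<Rightarrow> real \<Rightarrow> real \<Rightarrow> cmat2" where
  "transfer E \<epsilon> \<delta> w =
     (let k = arccos (- E / 2) in
      mk2 (cis (-k)) 0 0 (cis k) **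
      mexp (cmscale ((\<i> * complex_of_real \<delta> + complex_of_real (\<epsilon> * w)) / complex_of_real (2 * sin k))
                    (B2 + B3)))"

end

theory Submission
  imports Defs
begin

definition Tm :: "complex \<Rightarrow> complex \<Rightarrow> complex \<Rightarrow> cmat2" where
  "Tm q r c = mk2 (q * (1 + \<i> * c)) (q * (\<i> * c)) (- (r * (\<i> * c))) (r * (1 - \<i> * c))"

lemma mk2_nth: "mk2 a b c d $ 1 $ 1 = a" "mk2 a b c d $ 1 $ 2 = b" "mk2 a b c d $ 2 $ 1 = c" "mk2 a b c d $ 2 $ 2 = d"
  by (simp_all add: mk2_def)

lemma N_sq: "(B2 + B3) ** (B2 + B3) = 0"
  by (simp add: vec_eq_iff forall_2 matrix_matrix_mult_def sum_2 B2_def B3_def mk2_nth)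

lemma mpow_nil: assumes "X ** X = 0" shows "mpow X (Suc (Suc n)) = 0"
proof -
  have "mpow X (Suc (Suc n)) = (X ** X) ** mpow X n" by (simp add: matrix_mul_assoc)
  thus ?thesis using assms by (simp add: vec_eq_iff matrix_matrix_mult_def)
qed

lemma mexp_nil: assumes "X ** X = 0" shows "mexp X = mat 1 + X"
proof -
  have "mexp X = (\<Sum>n\<in>{0,1}. (1 / fact n) *\<^sub>R mpow X n)"
    unfolding mexp_def
  proof (rule suminf_finite)
    fix n :: nat assume "n \<notin> {0,1}"
    then obtain m where "n = Suc (Suc m)" by (metis insertCI not0_implies_Suc One_nat_def)
    thus "(1 / fact n) *\<^sub>R mpow X n = 0" using mpow_nil[OF assms] by simp
  qed simp
  also have "\<dots> = mat 1 + X" by (simp add: matrix_mul_rid)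
  finally show ?thesis .
qed

lemma cmscale_sq: "cmscale c X ** cmscale c X = cmscale (c*c) (X ** X)"
  by (simp add: vec_eq_iff cmscale_def matrix_matrix_mult_def sum_distrib_left mult_ac)

lemma transfer_eq:
  "transfer E \<epsilon> \<delta> w = Tm (cis (- arccos (- E / 2))) (cis (arccos (- E / 2)))
     ((\<i> * complex_of_real \<delta> + complex_of_real (\<epsilon> * w)) / complex_of_real (2 * sin (arccos (- E / 2))))"
proof -
  have "cmscale c (B2+B3) ** cmscale c (B2+B3) = 0" for c
    by (simp add: vec_eq_iff forall_2 matrix_matrix_mult_def sum_2 B2_def B3_def mk2_nth cmscale_def)
  then show ?thesis
    unfolding transfer_def Let_def
    apply (simp add: mexp_nil)
    apply (simp add: vec_eq_iff forall_2 matrix_matrix_mult_def sum_2 B2_def B3_def mk2_nth Tm_def cmscale_def mat_def)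
    done
qed

fun ycoord :: "complex option \<Rightarrow> complex option" where
  "ycoord None = Some 0"
| "ycoord (Some z) = (if z = -1 then None else Some (1 / (z + 1)))"

fun shft :: "complex \<Rightarrow> complex option \<Rightarrow> complex option" where
  "shft s None = None"
| "shft s (Some v) = Some (v + s)"

fun Phi :: "complex \<Rightarrow> complex option \<Rightarrow> complex option" where
  "Phi q None = Some (- (q^2))"
| "Phi q (Some v) = (if v = 0 then None else Some (q^2 * (1 / v - 1)))"

lemma inj_ycoord: "inj ycoord"
proof (rule injI)
  fix x y assume "ycoord x = ycoord y"
  then show "x = y"
    by (cases x; cases y) (auto split: if_splits simp: field_simps add_eq_0_iff2)
qed

lemma inj_shft: "inj (shft s)"
proof (rule injI)
  fix x y assume "shft s x = shft s y"
  then show "x = y" by (cases x; cases y) auto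
qed

lemma inj_Phi: assumes "q \<noteq> 0" shows "inj (Phi q)"
proof (rule injI)
  fix x y assume "Phi q x = Phi q y"
  then show "x = y" using assms
    by (cases x; cases y) (auto split: if_splits simp: field_simps)
qed

lemma mob_Tm: assumes "q * r = 1"
  shows "mob_act (Tm q r c) p = Phi q (shft (- (\<i> * c)) (ycoord p))"
proof (cases p)
  case None
  have r: "r \<noteq> 0" "q \<noteq> 0" using assms by auto
  have qr: "q / r = q^2"
  proof -
    have "q * q * r = q" using assms by (metis mult.assoc mult_1_right)
    then show ?thesis using r by (simp add: divide_eq_eq power2_eq_square)
  qed
  show ?thesis
  proof (cases "c = 0")
    case True then show ?thesis using None by (simp add: Tm_def mk2_nth)
  next
    case False
    have "q * (1 + \<i> * c) / - (r * (\<i> * c)) = q\<^sup>2 * (1 / - (\<i> * c) - 1)"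
      using False r qr[symmetric] by (simp add: field_simps power2_eq_square)
    then show ?thesis using None False r by (simp add: Tm_def mk2_nth)
  qed
next
  case (Some z)
  have r: "r \<noteq> 0" "q \<noteq> 0" using assms by auto
  have qr: "q / r = q^2"
  proof -
    have "q * q * r = q" using assms by (metis mult.assoc mult_1_right)
    then show ?thesis using r by (simp add: divide_eq_eq power2_eq_square)
  qed
  show ?thesis
  proof (cases "z = -1")
    case True
    have "(q * (1 + \<i> * c) * (-1) + q * (\<i> * c)) / (- (r * (\<i> * c)) * (-1) + r * (1 - \<i> * c)) = - (q^2)"
      using r qr by (simp add: field_simps power2_eq_square)
    then show ?thesis using Some True r by (simp add: Tm_def mk2_nth algebra_simps)
  next
    case False
    have z1: "z + 1 \<noteq> 0" using False by (metis add_eq_0_iff2 add.commute neg_equal_iff_equal)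
    have den: "- (r * (\<i> * c)) * z + r * (1 - \<i> * c) = r * (1 - \<i> * c * (z + 1))"
      by (simp add: algebra_simps)
    have iff: "(1 - \<i> * c * (z + 1) = 0) = (1 / (z + 1) - \<i> * c = 0)"
      using z1 by (auto simp: field_simps)
    show ?thesis
    proof (cases "1 - \<i> * c * (z + 1) = 0")
      case True
      then show ?thesis using Some False den iff r by (simp add: Tm_def mk2_nth)
    next
      case F2: False
      have "(q * (1 + \<i> * c) * z + q * (\<i> * c)) / (r * (1 - \<i> * c * (z + 1)))
          = q\<^sup>2 * (1 / (1 / (z + 1) - \<i> * c) - 1)"
      proof -
        let ?u = "z + 1" and ?D = "1 - \<i> * c * (z + 1)"
        have e1: "1 / (1 / ?u - \<i> * c) = ?u / ?D" using z1 F2 by (simp add: field_simps)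
        have e2: "?u / ?D - 1 = (z + \<i> * c * ?u) / ?D" using F2 by (simp add: field_simps)
        have e3: "q * (1 + \<i> * c) * z + q * (\<i> * c) = q * (z + \<i> * c * ?u)" by (simp add: algebra_simps)
        have "(q * (1 + \<i> * c) * z + q * (\<i> * c)) / (r * ?D) = (q / r) * ((z + \<i> * c * ?u) / ?D)"
          unfolding e3 by simp
        also have "\<dots> = q\<^sup>2 * (1 / (1 / ?u - \<i> * c) - 1)" unfolding e1 e2 qr ..
        finally show ?thesis .
      qed
      then show ?thesis using Some False den iff r F2 by (simp add: Tm_def mk2_nth)
    qed
  qed
qed

lemma msupport_distr_cont:
  assumes w: "w \<in> borel_measurable M" and g: "continuous_on UNIV g"
    and x: "x \<in> msupport (distr M borel w)"
  shows "g x \<in> msupport (distr M borel (\<lambda>s. g (w s)))"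
  unfolding msupport_def
proof (intro CollectI allI impI)
  fix U assume U: "open U" "g x \<in> U"
  have gm: "g \<in> borel_measurable borel" using g by (rule borel_measurable_continuous_onI)
  have gw: "(\<lambda>s. g (w s)) \<in> borel_measurable M" using measurable_compose[OF w gm] by (simp add: o_def)
  have V: "open (g -` U)" using g U(1) by (simp add: continuous_on_open_vimage)
  have "emeasure (distr M borel (\<lambda>s. g (w s))) U = emeasure M ((\<lambda>s. g (w s)) -` U \<inter> space M)"
    using gw U(1) by (simp add: emeasure_distr)
  also have "\<dots> = emeasure M (w -` (g -` U) \<inter> space M)" by (simp add: vimage_def)
  also have "\<dots> = emeasure (distr M borel w) (g -` U)"
    using w V by (simp add: emeasure_distr)
  also have "\<dots> > 0" using x V U(2) unfolding msupport_def by auto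
  finally show "emeasure (distr M borel (\<lambda>s. g (w s))) U > 0" .
qed

lemma cont_Tm:
  assumes "continuous_on UNIV f"
  shows "continuous_on UNIV (\<lambda>x. Tm q r (f x))"
proof -
  have eq: "(\<lambda>x. Tm q r (f x)) = (\<lambda>x. \<chi> i. \<chi> j. Tm q r (f x) $ i $ j)" by simp
  have "continuous_on UNIV (\<lambda>x. Tm q r (f x) $ i $ j)" for i j
  proof -
    have "i = 1 \<or> i = 2" "j = 1 \<or> j = 2" using exhaust_2 by auto
    then show ?thesis using assms
      by (elim disjE; simp add: Tm_def mk2_nth; intro continuous_intros; simp)
  qed
  then show ?thesis unfolding eq by (intro continuous_on_vec_lambda)
qed

theorem proposition5:
  fixes M :: "'s measure" and w :: "'s \<Rightarrow> real" and E \<epsilon> \<delta> :: real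
  assumes "prob_space M"
    and "w \<in> borel_measurable M"
    and "compact (msupport (distr M borel w))"
    and "E \<in> {-2<..<2}"
    and "\<epsilon> \<noteq> 0"
    and "\<exists>a b. a \<noteq> b \<and> a \<in> msupport (distr M borel w) \<and> b \<in> msupport (distr M borel w)"
  shows "\<forall>F :: complex option set. finite F \<and> F \<noteq> {} \<longrightarrow>
           \<not> ((\<lambda>(T, z). mob_act T z) ` (msupport (distr M borel (\<lambda>s. transfer E \<epsilon> \<delta> (w s))) \<times> F) \<subseteq> F)"
proof (intro allI impI notI)
  fix F :: "complex option set"
  assume F: "finite F \<and> F \<noteq> {}"
    and sub: "(\<lambda>(T, z). mob_act T z) ` (msupport (distr M borel (\<lambda>s. transfer E \<epsilon> \<delta> (w s))) \<times> F) \<subseteq> F"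
  obtain a b where ab: "a \<noteq> b" "a \<in> msupport (distr M borel w)" "b \<in> msupport (distr M borel w)"
    using assms(6) by blast
  define k where "k = arccos (- E / 2)"
  have k: "0 < k" "k < pi" unfolding k_def using assms(4) arccos_lt_bounded[of "- E / 2"] by auto
  have sk: "sin k > 0" using k by (simp add: sin_gt_zero)
  define q where "q = cis (- k)"
  define r where "r = cis k"
  have qr: "q * r = 1" unfolding q_def r_def by (simp add: cis_mult)
  have q0: "q \<noteq> 0" using qr by auto
  define cc where "cc = (\<lambda>x::real. (\<i> * complex_of_real \<delta> + complex_of_real (\<epsilon> * x)) / complex_of_real (2 * sin k))"
  have tr: "transfer E \<epsilon> \<delta> x = Tm q r (cc x)" for x
    unfolding transfer_eq q_def r_def cc_def k_def ..
  have ccc: "continuous_on UNIV cc" unfolding cc_def by (intro continuous_intros) (use sk in auto)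
  have gcont: "continuous_on UNIV (\<lambda>x. Tm q r (cc x))" by (rule cont_Tm[OF ccc])
  have supp: "Tm q r (cc x) \<in> msupport (distr M borel (\<lambda>s. transfer E \<epsilon> \<delta> (w s)))"
    if "x \<in> msupport (distr M borel w)" for x
    unfolding tr using msupport_distr_cont[OF assms(2) gcont that] .
  define fa where "fa = (\<lambda>p. Phi q (shft (- (\<i> * cc a)) (ycoord p)))"
  define fb where "fb = (\<lambda>p. Phi q (shft (- (\<i> * cc b)) (ycoord p)))"
  have fa_in: "fa p \<in> F" if "p \<in> F" for p
  proof -
    have "mob_act (Tm q r (cc a)) p \<in> F" using subsetD[OF sub imageI[OF SigmaI[OF supp[OF ab(2)] that]]] by simp
    then show ?thesis unfolding fa_def mob_Tm[OF qr] .
  qed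
  have fb_in: "fb ` F \<subseteq> F"
  proof
    fix y assume "y \<in> fb ` F"
    then obtain p where p: "p \<in> F" "y = fb p" by auto
    have "mob_act (Tm q r (cc b)) p \<in> F" using subsetD[OF sub imageI[OF SigmaI[OF supp[OF ab(3)] p(1)]]] by simp
    then show "y \<in> F" unfolding p(2) fb_def mob_Tm[OF qr] .
  qed
  have injfb: "inj fb"
  proof -
    have "fb = Phi q \<circ> shft (- (\<i> * cc b)) \<circ> ycoord" unfolding fb_def by (simp add: o_def)
    then show ?thesis using inj_Phi[OF q0] inj_shft inj_ycoord by (metis inj_compose)
  qed
  have fbF: "fb ` F = F" using endo_inj_surj[OF _ fb_in] F injfb inj_on_subset by blast
  define dd where "dd = \<i> * cc b - \<i> * cc a"
  have dd0: "dd \<noteq> 0"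
  proof
    assume "dd = 0"
    then have "cc a = cc b" unfolding dd_def by simp
    then have "complex_of_real (\<epsilon> * a) = complex_of_real (\<epsilon> * b)"
      unfolding cc_def using sk by (simp add: field_simps)
    then show False using ab(1) assms(5) by simp
  qed
  define S where "S = Some -` (ycoord ` F)"
  have finS: "finite S" unfolding S_def using F by (intro finite_vimageI) auto
  have step: "v + dd \<in> S" if "v \<in> S" for v
  proof -
    have "Some v \<in> ycoord ` F" using that unfolding S_def by simp
    then obtain p where p: "p \<in> F" "ycoord p = Some v" by (metis imageE)
    have "fa p \<in> fb ` F" using fa_in[OF p(1)] fbF by simp
    then obtain p' where p': "p' \<in> F" "fa p = fb p'" by auto
    then have "shft (- (\<i> * cc a)) (ycoord p) = shft (- (\<i> * cc b)) (ycoord p')"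
      using injD[OF inj_Phi[OF q0]] unfolding fa_def fb_def by blast
    then have "ycoord p' = Some (v + dd)" using p(2) unfolding dd_def
      by (cases "ycoord p'") (auto simp: algebra_simps)
    then show ?thesis using p'(1) unfolding S_def by (metis imageI vimageI2)
  qed
  have Sempty: "S = {}"
  proof (rule ccontr)
    assume "S \<noteq> {}"
    then obtain v where v: "v \<in> S" by auto
    have "v + of_nat n * dd \<in> S" for n
    proof (induction n)
      case 0 show ?case using v by simp
    next
      case (Suc n)
      then have "v + of_nat n * dd + dd \<in> S" by (rule step)
      then show ?case by (simp add: algebra_simps)
    qed
    then have "range (\<lambda>n. v + of_nat n * dd) \<subseteq> S" by auto
    moreover have "inj (\<lambda>n::nat. v + of_nat n * dd)" using dd0 by (auto simp: inj_def)
    ultimately show False using finS range_inj_infinite finite_subset by metis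
  qed
  obtain p where p: "p \<in> F" using F by auto
  have ynone: "ycoord x = None" if "x \<in> F" for x
  proof (cases "ycoord x")
    case (Some u)
    then have "u \<in> S" unfolding S_def using that by (metis imageI vimageI2)
    then show ?thesis using Sempty by simp
  qed
  have pm1: "p = Some (-1)" using ynone[OF p] by (cases p) (auto split: if_splits)
  have "fa p = Some (- (q^2))" unfolding fa_def pm1 by simp
  then have "ycoord (Some (- (q^2))) = None" using fa_in[OF p] ynone by metis
  then have "q^2 = 1" by (auto split: if_splits)
  then have "(q - 1) * (q + 1) = 0" by (simp add: algebra_simps power2_eq_square)
  then have "q = 1 \<or> q = -1" by (auto simp: add_eq_0_iff2)
  then have "Im q = 0" by auto
  then show False using sk unfolding q_def by simp
qed

end
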